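(* Let $\mu=\sum_{i=1}^m a_i\delta_{u_i}$ and $\nu=\sum_{j=1}^n b_j\delta_{v_j}$ be finitely supported finite measures on $S^2\subset\mathbb{R}^3$ (with $a_i,b_j>0$, $u_i,v_j\in S^2$), and let $(\gamma_0,\gamma_1)\in\Gamma(\mu,\nu)$. Then there exists a discrete semi-coupling $(A,B)\in\mathcal A(\mu,\nu)$ such that $$\int_{S^2\times S^2}\Big|\sqrt{\tfrac{d\gamma_0}{d\gamma}(u,v)}\,u-\sqrt{\tfrac{d\gamma_1}{d\gamma}(u,v)}\,v\Big|^2d\gamma(u,v)=\sum_{i=0}^m\sum_{j=0}^n\big|\sqrt{A_{ij}}\,u_i-\sqrt{B_{ij}}\,v_j\big|^2,$$ where $u_0=v_0=(1,0,0)\in S^2$ and $\gamma$ is a measure on $S^2\times S^2$ with $\gamma_0,\gamma_1\ll\gamma$.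
   Context: $\Gamma(\mu,\nu)$ is the set of pairs $(\gamma_0,\gamma_1)$ of finite Borel measures on $S^2\times S^2$ with $(\operatorname{Proj}_0)_\#\gamma_0=\mu$ and $(\operatorname{Proj}_1)_\#\gamma_1=\nu$. $\mathcal A(\mu,\nu)$ is the set of pairs $(A,B)$ of $(m+1)\times(n+1)$ matrices (indices $i=0,\dots,m$, $j=0,\dots,n$) with: $A_{ij},B_{ij}\ge0$; $a_i=\sum_{j=0}^nA_{ij}$ for $i=1,\dots,m$; $A_{0j}=0$ for all $j$; $b_j=\sum_{i=0}^mB_{ij}$ for $j=1,\dots,n$; $B_{i0}=0$ for all $i$. *)

theory Defs
  imports "HOL-Probability.Probability"
begin

definition S2 :: "(real^3) set" where
  "S2 = sphere 0 1"

definition borel_S2 :: "(real^3) measure" where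
  "borel_S2 = restrict_space borel S2"

definition borel_S2S2 :: "((real^3) \<times> (real^3)) measure" where
  "borel_S2S2 = restrict_space borel (S2 \<times> S2)"

definition e1 :: "real^3" where
  "e1 = vector [1, 0, 0]"

definition finite_borel_S2S2 :: "((real^3) \<times> (real^3)) measure \<Rightarrow> bool" where
  "finite_borel_S2S2 M \<longleftrightarrow> sets M = sets borel_S2S2 \<and> finite_measure M"

definition is_discrete_measure ::
  "(real^3) measure \<Rightarrow> nat \<Rightarrow> (nat \<Rightarrow> real) \<Rightarrow> (nat \<Rightarrow> real^3) \<Rightarrow> bool" where
  "is_discrete_measure M m a u \<longleftrightarrow> sets M = sets borel_S2 \<and>
     (\<forall>X \<in> sets borel_S2. emeasure M X = ennreal (\<Sum>i\<in>{1..m}. a i * indicator X (u i)))"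

definition Gamma ::
  "nat \<Rightarrow> (nat \<Rightarrow> real) \<Rightarrow> (nat \<Rightarrow> real^3) \<Rightarrow> nat \<Rightarrow> (nat \<Rightarrow> real) \<Rightarrow> (nat \<Rightarrow> real^3)
   \<Rightarrow> ((real^3) \<times> (real^3)) measure \<Rightarrow> ((real^3) \<times> (real^3)) measure \<Rightarrow> bool" where
  "Gamma m a u n b v \<gamma>0 \<gamma>1 \<longleftrightarrow>
     finite_borel_S2S2 \<gamma>0 \<and> finite_borel_S2S2 \<gamma>1 \<and>
     is_discrete_measure (distr \<gamma>0 borel_S2 fst) m a u \<and>
     is_discrete_measure (distr \<gamma>1 borel_S2 snd) n b v"

definition A_adm ::
  "nat \<Rightarrow> (nat \<Rightarrow> real) \<Rightarrow> nat \<Rightarrow> (nat \<Rightarrow> real)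
   \<Rightarrow> (nat \<Rightarrow> nat \<Rightarrow> real) \<Rightarrow> (nat \<Rightarrow> nat \<Rightarrow> real) \<Rightarrow> bool" where
  "A_adm m a n b A B \<longleftrightarrow>
     (\<forall>i\<le>m. \<forall>j\<le>n. A i j \<ge> 0 \<and> B i j \<ge> 0) \<and>
     (\<forall>i\<in>{1..m}. a i = (\<Sum>j\<le>n. A i j)) \<and>
     (\<forall>j\<le>n. A 0 j = 0) \<and>
     (\<forall>j\<in>{1..n}. b j = (\<Sum>i\<le>m. B i j)) \<and>
     (\<forall>i\<le>m. B i 0 = 0)"

end

theory Submission
  imports Defs
begin

lemma fiber_sum:
  fixes w :: "'i \<Rightarrow> real" and \<phi> :: "'i \<Rightarrow> 'a" and h :: "'a \<Rightarrow> real"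
  assumes fin: "finite J" and pos: "\<forall>j\<in>J. w j > 0"
  shows "(\<Sum>j\<in>J. w j / (\<Sum>k\<in>{k\<in>J. \<phi> k = \<phi> j}. w k) * h (\<phi> j)) = (\<Sum>y\<in>\<phi>`J. h y)"
proof -
  have "(\<Sum>j\<in>J. w j / (\<Sum>k\<in>{k\<in>J. \<phi> k = \<phi> j}. w k) * h (\<phi> j))
      = (\<Sum>y\<in>\<phi>`J. \<Sum>j\<in>{x\<in>J. \<phi> x = y}. w j / (\<Sum>k\<in>{k\<in>J. \<phi> k = \<phi> j}. w k) * h (\<phi> j))"
    using fin by (rule sum.image_gen)
  also have "\<dots> = (\<Sum>y\<in>\<phi>`J. h y)"
  proof (rule sum.cong[OF refl])
    fix y assume y: "y \<in> \<phi>`J"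
    let ?F = "{x\<in>J. \<phi> x = y}"
    have Fpos: "(\<Sum>k\<in>?F. w k) > 0"
      using y fin pos by (intro sum_pos2[where i="SOME x. x\<in>J \<and> \<phi> x = y"]) (auto intro: someI2_ex)
    have "(\<Sum>j\<in>?F. w j / (\<Sum>k\<in>{k\<in>J. \<phi> k = \<phi> j}. w k) * h (\<phi> j))
        = (\<Sum>j\<in>?F. w j * (h y / (\<Sum>k\<in>?F. w k)))"
      by (rule sum.cong) auto
    also have "\<dots> = (\<Sum>k\<in>?F. w k) * (h y / (\<Sum>k\<in>?F. w k))"
      by (rule sum_distrib_right[symmetric])
    also have "\<dots> = h y" using Fpos by simp
    finally show "(\<Sum>j\<in>?F. w j / (\<Sum>k\<in>{k\<in>J. \<phi> k = \<phi> j}. w k) * h (\<phi> j)) = h y" .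
  qed
  finally show ?thesis .
qed

lemma homog:
  fixes x y :: "real^3"
  assumes "t \<ge> 0" "A \<ge> 0" "B \<ge> 0"
  shows "(norm (sqrt (t*A) *\<^sub>R x - sqrt (t*B) *\<^sub>R y))\<^sup>2 = t * (norm (sqrt A *\<^sub>R x - sqrt B *\<^sub>R y))\<^sup>2"
proof -
  have "sqrt (t*A) *\<^sub>R x - sqrt (t*B) *\<^sub>R y = sqrt t *\<^sub>R (sqrt A *\<^sub>R x - sqrt B *\<^sub>R y)"
    by (simp add: real_sqrt_mult scaleR_diff_right)
  then show ?thesis using assms by (simp add: power_mult_distrib)
qed

lemma split0: "(\<Sum>i\<le>(m::nat). f i) = f 0 + (\<Sum>i\<in>{1..m}. f i)"
  by (simp add: atMost_atLeast0 sum.atLeast_Suc_atMost)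

lemma S2_norm: "x \<in> S2 \<Longrightarrow> norm x = 1"
  by (simp add: S2_def)

lemma closed_S2: "closed S2" by (simp add: S2_def)

lemma space_S2S2: "space borel_S2S2 = S2 \<times> S2"
  by (simp add: borel_S2S2_def space_restrict_space)

lemma sets_S2S2I: "C \<in> sets borel \<Longrightarrow> C \<subseteq> S2 \<times> S2 \<Longrightarrow> C \<in> sets borel_S2S2"
  unfolding borel_S2S2_def
  by (subst sets_restrict_space_iff) (auto intro!: borel_closed closed_Times closed_S2)

lemma sets_S2I: "C \<in> sets borel \<Longrightarrow> C \<subseteq> S2 \<Longrightarrow> C \<in> sets borel_S2"
  unfolding borel_S2_def
  by (subst sets_restrict_space_iff) (auto intro!: borel_closed closed_S2)

lemma fst_meas: "fst \<in> measurable borel_S2S2 borel_S2"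
  unfolding borel_S2S2_def borel_S2_def
  by (rule measurable_restrict_space3) (auto intro!: borel_measurable_continuous_onI continuous_intros)

lemma snd_meas: "snd \<in> measurable borel_S2S2 borel_S2"
  unfolding borel_S2S2_def borel_S2_def
  by (rule measurable_restrict_space3) (auto intro!: borel_measurable_continuous_onI continuous_intros)

lemma sets_S2_sub: "X \<in> sets borel_S2 \<Longrightarrow> X \<subseteq> S2"
  using sets.sets_into_space[of X borel_S2] by (simp add: borel_S2_def space_restrict_space)

lemma sets_S2S2_Times:
  assumes X: "X \<in> sets borel_S2" and Y: "Y \<in> sets borel_S2"
  shows "X \<times> Y \<in> sets borel_S2S2"
proof -
  have "fst -` X \<inter> space borel_S2S2 \<in> sets borel_S2S2"
    using measurable_sets[OF fst_meas X] .
  moreover have "snd -` Y \<inter> space borel_S2S2 \<in> sets borel_S2S2"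
    using measurable_sets[OF snd_meas Y] .
  moreover have "X \<times> Y = (fst -` X \<inter> space borel_S2S2) \<inter> (snd -` Y \<inter> space borel_S2S2)"
    using sets_S2_sub[OF X] sets_S2_sub[OF Y] by (auto simp: space_S2S2)
  ultimately show ?thesis by simp
qed

lemma sets_S2_finite: "finite F \<Longrightarrow> F \<subseteq> S2 \<Longrightarrow> F \<in> sets borel_S2"
  by (rule sets_S2I) (auto intro: borel_closed finite_imp_closed)

lemma sets_S2_diff:
  assumes "F \<in> sets borel_S2" shows "S2 - F \<in> sets borel_S2"
proof -
  have "F \<in> sets borel" using assms closed_S2
    by (subst (asm) borel_S2_def, subst (asm) sets_restrict_space_iff) (auto intro: borel_closed)
  moreover have "S2 \<in> sets borel" using closed_S2 by (rule borel_closed)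
  ultimately show ?thesis by (intro sets_S2I) auto
qed

lemma sets_S2_UNIV: "S2 \<in> sets borel_S2"
  by (rule sets_S2I) (auto intro!: borel_closed closed_S2)

lemma marg0:
  assumes fb: "finite_borel_S2S2 M" and d: "is_discrete_measure (distr M borel_S2 fst) m a u"
    and X: "X \<in> sets borel_S2"
  shows "emeasure M (X \<times> S2) = ennreal (\<Sum>i\<in>{1..m}. a i * indicator X (u i))"
proof -
  have sM: "sets M = sets borel_S2S2" using fb by (simp add: finite_borel_S2S2_def)
  then have spM: "space M = S2 \<times> S2" using sets_eq_imp_space_eq space_S2S2 by metis
  have fm: "fst \<in> measurable M borel_S2" using fst_meas measurable_cong_sets[OF sM refl] by blast
  have "emeasure (distr M borel_S2 fst) X = emeasure M (fst -` X \<inter> space M)"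
    by (rule emeasure_distr[OF fm X])
  moreover have "fst -` X \<inter> space M = X \<times> S2" using sets_S2_sub[OF X] spM by auto
  ultimately show ?thesis using d X by (simp add: is_discrete_measure_def)
qed

lemma marg1:
  assumes fb: "finite_borel_S2S2 M" and d: "is_discrete_measure (distr M borel_S2 snd) m a u"
    and X: "X \<in> sets borel_S2"
  shows "emeasure M (S2 \<times> X) = ennreal (\<Sum>i\<in>{1..m}. a i * indicator X (u i))"
proof -
  have sM: "sets M = sets borel_S2S2" using fb by (simp add: finite_borel_S2S2_def)
  then have spM: "space M = S2 \<times> S2" using sets_eq_imp_space_eq space_S2S2 by metis
  have fm: "snd \<in> measurable M borel_S2" using snd_meas measurable_cong_sets[OF sM refl] by blast
  have "emeasure (distr M borel_S2 snd) X = emeasure M (snd -` X \<inter> space M)"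
    by (rule emeasure_distr[OF fm X])
  moreover have "snd -` X \<inter> space M = S2 \<times> X" using sets_S2_sub[OF X] spM by auto
  ultimately show ?thesis using d X by (simp add: is_discrete_measure_def)
qed

lemma split_col:
  assumes fb: "finite_borel_S2S2 M" and X: "X \<in> sets borel_S2" and Y: "Y \<in> sets borel_S2"
    and F: "finite F" "F \<subseteq> Y"
  shows "measure M (X \<times> Y) = measure M (X \<times> (Y - F)) + (\<Sum>y\<in>F. measure M (X \<times> {y}))"
proof -
  have sM: "sets M = sets borel_S2S2" and fm: "finite_measure M" using fb by (auto simp: finite_borel_S2S2_def)
  interpret finite_measure M by fact
  have FS: "F \<subseteq> S2" using F sets_S2_sub[OF Y] by auto
  have sY: "Y - F \<in> sets borel_S2"
    using Y sets_S2_finite[OF F(1) FS] by (auto simp: borel_S2_def)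
  have sy: "y \<in> F \<Longrightarrow> X \<times> {y} \<in> sets M" for y
    using sM sets_S2S2_Times[OF X sets_S2_finite[of "{y}"]] FS by auto
  have "X \<times> Y = X \<times> (Y - F) \<union> (\<Union>y\<in>F. X \<times> {y})" using F by auto
  then have "measure M (X \<times> Y) = measure M (X \<times> (Y - F)) + measure M (\<Union>y\<in>F. X \<times> {y})"
    using sM sets_S2S2_Times[OF X sY] sy
    by (simp, intro finite_measure_Union) (auto intro!: sets.finite_UN F)
  also have "measure M (\<Union>y\<in>F. X \<times> {y}) = (\<Sum>y\<in>F. measure M (X \<times> {y}))"
    using sy F by (intro finite_measure_finite_Union) (auto simp: disjoint_family_on_def)
  finally show ?thesis .
qed

lemma split_row:
  assumes fb: "finite_borel_S2S2 M" and X: "X \<in> sets borel_S2" and Y: "Y \<in> sets borel_S2"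
    and F: "finite F" "F \<subseteq> Y"
  shows "measure M (Y \<times> X) = measure M ((Y - F) \<times> X) + (\<Sum>y\<in>F. measure M ({y} \<times> X))"
proof -
  have sM: "sets M = sets borel_S2S2" and fm: "finite_measure M" using fb by (auto simp: finite_borel_S2S2_def)
  interpret finite_measure M by fact
  have FS: "F \<subseteq> S2" using F sets_S2_sub[OF Y] by auto
  have sY: "Y - F \<in> sets borel_S2"
    using Y sets_S2_finite[OF F(1) FS] by (auto simp: borel_S2_def)
  have sy: "y \<in> F \<Longrightarrow> {y} \<times> X \<in> sets M" for y
    using sM sets_S2S2_Times[OF sets_S2_finite[of "{y}"] X] FS by auto
  have "Y \<times> X = (Y - F) \<times> X \<union> (\<Union>y\<in>F. {y} \<times> X)" using F by auto
  then have "measure M (Y \<times> X) = measure M ((Y - F) \<times> X) + measure M (\<Union>y\<in>F. {y} \<times> X)"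
    using sM sets_S2S2_Times[OF sY X] sy
    by (simp, intro finite_measure_Union) (auto intro!: sets.finite_UN F)
  also have "measure M (\<Union>y\<in>F. {y} \<times> X) = (\<Sum>y\<in>F. measure M ({y} \<times> X))"
    using sy F by (intro finite_measure_finite_Union) (auto simp: disjoint_family_on_def)
  finally show ?thesis .
qed

lemma point_eq:
  fixes x y :: "real^3"
  assumes e0: "E0 = r0 * e" and e1: "E1 = r1 * e" and f0: "E0 \<noteq> \<top>" and f1: "E1 \<noteq> \<top>"
  shows "ennreal ((norm (sqrt (enn2real r0) *\<^sub>R x - sqrt (enn2real r1) *\<^sub>R y))\<^sup>2) * e
       = ennreal ((norm (sqrt (enn2real E0) *\<^sub>R x - sqrt (enn2real E1) *\<^sub>R y))\<^sup>2)"
proof (cases "e = 0")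
  case True then have "E0 = 0" "E1 = 0" using e0 e1 by simp_all
  then show ?thesis using True by simp
next
  case enz: False
  show ?thesis
  proof (cases "e = \<infinity>")
    case True
    have "r0 = 0"
    proof (rule ccontr)
      assume "r0 \<noteq> 0" then have "E0 = \<infinity>" using e0 True by (simp add: ennreal_mult_eq_top_iff)
      then show False using f0 by simp
    qed
    moreover have "r1 = 0"
    proof (rule ccontr)
      assume "r1 \<noteq> 0" then have "E1 = \<infinity>" using e1 True by (simp add: ennreal_mult_eq_top_iff)
      then show False using f1 by simp
    qed
    ultimately have "E0 = 0" "E1 = 0" using e0 e1 by simp_all
    then show ?thesis using \<open>r0 = 0\<close> \<open>r1 = 0\<close> by simp
  next
    case False
    define G where "G = enn2real e"
    have G: "e = ennreal G" using False unfolding G_def by (simp add: less_top)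
    have Gpos: "G > 0" using enz G
      by (metis ennreal_0 enn2real_nonneg G_def order_le_less)
    have "r0 \<noteq> \<infinity>"
    proof
      assume "r0 = \<infinity>" then have "E0 = \<infinity>" using e0 enz by (simp add: ennreal_mult_eq_top_iff)
      then show False using f0 by simp
    qed
    have "r1 \<noteq> \<infinity>"
    proof
      assume "r1 = \<infinity>" then have "E1 = \<infinity>" using e1 enz by (simp add: ennreal_mult_eq_top_iff)
      then show False using f1 by simp
    qed
    define R0 where "R0 = enn2real r0"
    define R1 where "R1 = enn2real r1"
    have R: "r0 = ennreal R0" "r1 = ennreal R1" "R0 \<ge> 0" "R1 \<ge> 0"
      using \<open>r0 \<noteq> \<infinity>\<close> \<open>r1 \<noteq> \<infinity>\<close> unfolding R0_def R1_def by (simp_all add: less_top)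
    have "E0 = ennreal (G * R0)" using e0 G R Gpos by (simp add: ennreal_mult'' mult.commute)
    moreover have "E1 = ennreal (G * R1)" using e1 G R Gpos by (simp add: ennreal_mult'' mult.commute)
    ultimately have E: "enn2real E0 = G * R0" "enn2real E1 = G * R1"
      using R Gpos by simp_all
    have "ennreal ((norm (sqrt (enn2real r0) *\<^sub>R x - sqrt (enn2real r1) *\<^sub>R y))\<^sup>2) * e
        = ennreal ((norm (sqrt R0 *\<^sub>R x - sqrt R1 *\<^sub>R y))\<^sup>2 * G)"
      using Gpos unfolding G R0_def R1_def by (simp add: ennreal_mult'')
    also have "\<dots> = ennreal ((norm (sqrt (G*R0) *\<^sub>R x - sqrt (G*R1) *\<^sub>R y))\<^sup>2)"
      using homog[of G R0 R1 x y] R Gpos by (simp add: mult.commute)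
    finally show ?thesis using E by simp
  qed
qed

lemma norm_sqrt_scale: "norm (x::real^3) = 1 \<Longrightarrow> t \<ge> 0 \<Longrightarrow> (norm (sqrt t *\<^sub>R x))\<^sup>2 = t"
  by (simp add: power_mult_distrib)

lemma integral_formula:
  fixes \<gamma> \<gamma>0 \<gamma>1 :: "((real^3) \<times> (real^3)) measure" and U V :: "(real^3) set"
  assumes sg: "sets \<gamma> = sets borel_S2S2" and sf: "sigma_finite_measure \<gamma>"
    and ac0: "absolutely_continuous \<gamma> \<gamma>0" and ac1: "absolutely_continuous \<gamma> \<gamma>1"
    and fb0: "finite_borel_S2S2 \<gamma>0" and fb1: "finite_borel_S2S2 \<gamma>1"
    and U: "finite U" "U \<subseteq> S2" and V: "finite V" "V \<subseteq> S2"
    and n0: "emeasure \<gamma>0 ((S2 - U) \<times> S2) = 0" and n1: "emeasure \<gamma>1 (S2 \<times> (S2 - V)) = 0"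
  shows "(\<integral>\<^sup>+ p. ennreal ((norm (sqrt (enn2real (RN_deriv \<gamma> \<gamma>0 p)) *\<^sub>R fst p
                                 - sqrt (enn2real (RN_deriv \<gamma> \<gamma>1 p)) *\<^sub>R snd p))\<^sup>2) \<partial>\<gamma>)
     = ennreal ((\<Sum>q\<in>U\<times>V. (norm (sqrt (measure \<gamma>0 {q}) *\<^sub>R fst q - sqrt (measure \<gamma>1 {q}) *\<^sub>R snd q))\<^sup>2)
          + measure \<gamma>0 (U \<times> (S2 - V)) + measure \<gamma>1 ((S2 - U) \<times> V))"
proof -
  interpret sigma_finite_measure \<gamma> by fact
  have s0: "sets \<gamma>0 = sets \<gamma>" and s1: "sets \<gamma>1 = sets \<gamma>"
    using fb0 fb1 sg by (simp_all add: finite_borel_S2S2_def)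
  interpret f0: finite_measure \<gamma>0 using fb0 by (simp add: finite_borel_S2S2_def)
  interpret f1: finite_measure \<gamma>1 using fb1 by (simp add: finite_borel_S2S2_def)
  define r0 where "r0 = RN_deriv \<gamma> \<gamma>0"
  define r1 where "r1 = RN_deriv \<gamma> \<gamma>1"
  have mr0[measurable]: "r0 \<in> borel_measurable \<gamma>" and mr1[measurable]: "r1 \<in> borel_measurable \<gamma>"
    by (simp_all add: r0_def r1_def)
  have spg: "space \<gamma> = S2 \<times> S2" using sg sets_eq_imp_space_eq space_S2S2 by metis
  have sU: "U \<in> sets borel_S2" "S2 - U \<in> sets borel_S2" using U sets_S2_finite sets_S2_diff by auto
  have sV: "V \<in> sets borel_S2" "S2 - V \<in> sets borel_S2" using V sets_S2_finite sets_S2_diff by auto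
  have sUV[measurable]: "U \<times> (S2 - V) \<in> sets \<gamma>" "(S2 - U) \<times> V \<in> sets \<gamma>"
     "(S2 - U) \<times> S2 \<in> sets \<gamma>" "S2 \<times> (S2 - V) \<in> sets \<gamma>"
    using sU sV sets_S2_UNIV sg by (auto intro!: sets_S2S2_Times)
  have sq: "q \<in> S2 \<times> S2 \<Longrightarrow> {q} \<in> sets \<gamma>" for q
    using sets_S2S2_Times[OF sets_S2_finite[of "{fst q}"] sets_S2_finite[of "{snd q}"]] sg
    by (cases q) auto
  have d0: "density \<gamma> r0 = \<gamma>0" unfolding r0_def by (rule density_RN_deriv[OF ac0 s0])
  have d1: "density \<gamma> r1 = \<gamma>1" unfolding r1_def by (rule density_RN_deriv[OF ac1 s1])
  have em0: "emeasure \<gamma>0 S = (\<integral>\<^sup>+x. r0 x * indicator S x \<partial>\<gamma>)" if "S \<in> sets \<gamma>" for S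
    using emeasure_density[OF mr0 that] d0 by simp
  have em1: "emeasure \<gamma>1 S = (\<integral>\<^sup>+x. r1 x * indicator S x \<partial>\<gamma>)" if "S \<in> sets \<gamma>" for S
    using emeasure_density[OF mr1 that] d1 by simp
  have fin0: "AE x in \<gamma>. r0 x \<noteq> \<infinity>"
  proof (rule nn_integral_PInf_AE[OF mr0])
    have "(\<integral>\<^sup>+x. r0 x * indicator (space \<gamma>) x \<partial>\<gamma>) = integral\<^sup>N \<gamma> r0"
      by (rule nn_integral_cong) simp
    then show "integral\<^sup>N \<gamma> r0 \<noteq> \<infinity>" using em0[of "space \<gamma>"] f0.emeasure_finite[of "space \<gamma>"] by (simp add: top_unique)
  qed
  have fin1: "AE x in \<gamma>. r1 x \<noteq> \<infinity>"
  proof (rule nn_integral_PInf_AE[OF mr1])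
    have "(\<integral>\<^sup>+x. r1 x * indicator (space \<gamma>) x \<partial>\<gamma>) = integral\<^sup>N \<gamma> r1"
      by (rule nn_integral_cong) simp
    then show "integral\<^sup>N \<gamma> r1 \<noteq> \<infinity>" using em1[of "space \<gamma>"] f1.emeasure_finite[of "space \<gamma>"] by (simp add: top_unique)
  qed
  have zero0: "AE x in \<gamma>. x \<in> (S2 - U) \<times> S2 \<longrightarrow> r0 x = 0"
  proof -
    have "(\<integral>\<^sup>+x. r0 x * indicator ((S2 - U) \<times> S2) x \<partial>\<gamma>) = 0" using em0 n0 sUV by simp
    then have "AE x in \<gamma>. r0 x * indicator ((S2 - U) \<times> S2) x = 0"
      by (subst (asm) nn_integral_0_iff_AE) auto
    then show ?thesis by eventually_elim (auto simp: indicator_def)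
  qed
  have zero1: "AE x in \<gamma>. x \<in> S2 \<times> (S2 - V) \<longrightarrow> r1 x = 0"
  proof -
    have "(\<integral>\<^sup>+x. r1 x * indicator (S2 \<times> (S2 - V)) x \<partial>\<gamma>) = 0" using em1 n1 sUV by simp
    then have "AE x in \<gamma>. r1 x * indicator (S2 \<times> (S2 - V)) x = 0"
      by (subst (asm) nn_integral_0_iff_AE) auto
    then show ?thesis by eventually_elim (auto simp: indicator_def)
  qed
  define f where "f p = ennreal ((norm (sqrt (enn2real (r0 p)) *\<^sub>R fst p - sqrt (enn2real (r1 p)) *\<^sub>R snd p))\<^sup>2)" for p
  define c where "c q = (norm (sqrt (measure \<gamma>0 {q}) *\<^sub>R fst q - sqrt (measure \<gamma>1 {q}) *\<^sub>R snd q))\<^sup>2" for q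
  have UVS: "U \<times> V \<subseteq> S2 \<times> S2" using U V by auto
  have AEeq: "AE p in \<gamma>. f p = (\<Sum>q\<in>U\<times>V. f q * indicator {q} p) + r0 p * indicator (U \<times> (S2 - V)) p
                                 + r1 p * indicator ((S2 - U) \<times> V) p"
    using AE_space fin0 fin1 zero0 zero1
  proof eventually_elim
    case (elim p)
    obtain x y where pxy: "p = (x, y)" by (cases p)
    have xy: "x \<in> S2" "y \<in> S2" using elim(1) spg pxy by auto
    have h0: "r0 p = 0" if "x \<notin> U" using elim(4) xy pxy that by blast
    have h1: "r1 p = 0" if "y \<notin> V" using elim(5) xy pxy that by blast
    have "(\<Sum>q\<in>U\<times>V. f q * indicator {q} p) = (\<Sum>q\<in>U\<times>V. if q = p then f q else 0)"
      by (rule sum.cong) (simp_all add: indicator_def)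
    also have "\<dots> = (if p \<in> U \<times> V then f p else 0)"
      using U V by (simp add: sum.delta')
    finally have sumeq: "(\<Sum>q\<in>U\<times>V. f q * indicator {q} p) = (if p \<in> U \<times> V then f p else 0)" .
    have nx: "norm x = 1" "norm y = 1" using xy by (simp_all add: S2_norm)
    show ?case
    proof (cases "x \<in> U")
      case xU: True
      show ?thesis
      proof (cases "y \<in> V")
        case True
        then show ?thesis using xU unfolding sumeq by (simp add: pxy indicator_def)
      next
        case False
        have r: "r1 p = 0" using h1 False .
        have "f p = ennreal (enn2real (r0 p))"
          unfolding f_def using r nx pxy by (simp add: norm_sqrt_scale)
        also have "\<dots> = r0 p" using elim(2) by (simp add: less_top)
        finally show ?thesis using xU False xy unfolding sumeq by (simp add: pxy indicator_def)
      qed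
    next
      case xU: False
      have r: "r0 p = 0" using h0 xU .
      show ?thesis
      proof (cases "y \<in> V")
        case True
        have "f p = ennreal (enn2real (r1 p))"
          unfolding f_def using r nx pxy by (simp add: norm_sqrt_scale)
        also have "\<dots> = r1 p" using elim(3) by (simp add: less_top)
        finally show ?thesis using xU True xy unfolding sumeq by (simp add: pxy indicator_def)
      next
        case False
        have "f p = 0" unfolding f_def using r h1[OF False] by simp
        then show ?thesis using xU False unfolding sumeq by (simp add: pxy indicator_def)
      qed
    qed
  qed
  have msum: "(\<lambda>p. \<Sum>q\<in>U\<times>V. f q * indicator {q} p) \<in> borel_measurable \<gamma>"
    using sq UVS by (intro borel_measurable_sum borel_measurable_times_ennreal borel_measurable_indicator borel_measurable_const) auto
  have m0: "(\<lambda>p. r0 p * indicator (U \<times> (S2 - V)) p) \<in> borel_measurable \<gamma>" by measurable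
  have m1: "(\<lambda>p. r1 p * indicator ((S2 - U) \<times> V) p) \<in> borel_measurable \<gamma>" by measurable
  have "(\<integral>\<^sup>+ p. ennreal ((norm (sqrt (enn2real (RN_deriv \<gamma> \<gamma>0 p)) *\<^sub>R fst p
                                 - sqrt (enn2real (RN_deriv \<gamma> \<gamma>1 p)) *\<^sub>R snd p))\<^sup>2) \<partial>\<gamma>) = integral\<^sup>N \<gamma> f"
    unfolding f_def[abs_def] r0_def r1_def by (rule refl)
  also have "\<dots> = (\<integral>\<^sup>+p. (\<Sum>q\<in>U\<times>V. f q * indicator {q} p) + r0 p * indicator (U \<times> (S2 - V)) p
                                 + r1 p * indicator ((S2 - U) \<times> V) p \<partial>\<gamma>)"
    by (rule nn_integral_cong_AE[OF AEeq])
  also have "\<dots> = (\<integral>\<^sup>+p. (\<Sum>q\<in>U\<times>V. f q * indicator {q} p) + r0 p * indicator (U \<times> (S2 - V)) p \<partial>\<gamma>)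
                   + (\<integral>\<^sup>+p. r1 p * indicator ((S2 - U) \<times> V) p \<partial>\<gamma>)"
    by (rule nn_integral_add[OF borel_measurable_add[OF msum m0] m1])
  also have "(\<integral>\<^sup>+p. (\<Sum>q\<in>U\<times>V. f q * indicator {q} p) + r0 p * indicator (U \<times> (S2 - V)) p \<partial>\<gamma>)
      = (\<integral>\<^sup>+p. (\<Sum>q\<in>U\<times>V. f q * indicator {q} p) \<partial>\<gamma>) + (\<integral>\<^sup>+p. r0 p * indicator (U \<times> (S2 - V)) p \<partial>\<gamma>)"
    by (rule nn_integral_add[OF msum m0])
  also have "(\<integral>\<^sup>+p. (\<Sum>q\<in>U\<times>V. f q * indicator {q} p) \<partial>\<gamma>) = (\<Sum>q\<in>U\<times>V. \<integral>\<^sup>+p. f q * indicator {q} p \<partial>\<gamma>)"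
    using sq UVS by (intro nn_integral_sum borel_measurable_times_ennreal borel_measurable_indicator borel_measurable_const) auto
  also have "\<dots> = (\<Sum>q\<in>U\<times>V. ennreal (c q))"
  proof (rule sum.cong[OF refl])
    fix q assume q: "q \<in> U \<times> V"
    then have qS: "q \<in> S2 \<times> S2" using UVS by auto
    have e: "(\<integral>\<^sup>+p. f q * indicator {q} p \<partial>\<gamma>) = f q * emeasure \<gamma> {q}"
      by (rule nn_integral_indicator_singleton[OF sq[OF qS]])
    have e0: "emeasure \<gamma>0 {q} = r0 q * emeasure \<gamma> {q}"
      using em0[OF sq[OF qS]] nn_integral_indicator_singleton[OF sq[OF qS], of r0] by simp
    have e1: "emeasure \<gamma>1 {q} = r1 q * emeasure \<gamma> {q}"
      using em1[OF sq[OF qS]] nn_integral_indicator_singleton[OF sq[OF qS], of r1] by simp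
    have "f q * emeasure \<gamma> {q} = ennreal (c q)"
      unfolding f_def c_def measure_def
      by (rule point_eq[OF e0 e1 f0.emeasure_finite f1.emeasure_finite])
    then show "(\<integral>\<^sup>+p. f q * indicator {q} p \<partial>\<gamma>) = ennreal (c q)" using e by simp
  qed
  also have "\<dots> = ennreal (\<Sum>q\<in>U\<times>V. c q)"
    by (rule sum_ennreal) (simp add: c_def)
  also have "(\<integral>\<^sup>+p. r0 p * indicator (U \<times> (S2 - V)) p \<partial>\<gamma>) = ennreal (measure \<gamma>0 (U \<times> (S2 - V)))"
    using em0[OF sUV(1)] f0.emeasure_eq_measure[of "U \<times> (S2 - V)"] by simp
  also have "(\<integral>\<^sup>+p. r1 p * indicator ((S2 - U) \<times> V) p \<partial>\<gamma>) = ennreal (measure \<gamma>1 ((S2 - U) \<times> V))"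
    using em1[OF sUV(2)] f1.emeasure_eq_measure[of "(S2 - U) \<times> V"] by simp
  also have "ennreal (\<Sum>q\<in>U\<times>V. c q) + ennreal (measure \<gamma>0 (U \<times> (S2 - V))) + ennreal (measure \<gamma>1 ((S2 - U) \<times> V))
     = ennreal ((\<Sum>q\<in>U\<times>V. c q) + measure \<gamma>0 (U \<times> (S2 - V)) + measure \<gamma>1 ((S2 - U) \<times> V))"
    by (simp add: ennreal_plus sum_nonneg c_def)
  finally show ?thesis unfolding c_def .
qed

theorem lemma2p5:
  fixes m n :: nat
    and a b :: "nat \<Rightarrow> real"
    and u v :: "nat \<Rightarrow> real^3"
    and \<gamma>0 \<gamma>1 :: "((real^3) \<times> (real^3)) measure"
  assumes a_pos: "\<forall>i\<in>{1..m}. a i > 0"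
    and b_pos: "\<forall>j\<in>{1..n}. b j > 0"
    and u_S2: "\<forall>i\<in>{1..m}. u i \<in> S2"
    and v_S2: "\<forall>j\<in>{1..n}. v j \<in> S2"
    and Gam: "Gamma m a u n b v \<gamma>0 \<gamma>1"
  shows "\<exists>A B. A_adm m a n b A B \<and>
    (\<forall>\<gamma> :: ((real^3) \<times> (real^3)) measure.
       sets \<gamma> = sets borel_S2S2 \<and> sigma_finite_measure \<gamma> \<and>
       absolutely_continuous \<gamma> \<gamma>0 \<and> absolutely_continuous \<gamma> \<gamma>1 \<longrightarrow>
       (\<integral>\<^sup>+ p. ennreal ((norm (sqrt (enn2real (RN_deriv \<gamma> \<gamma>0 p)) *\<^sub>R fst p
                                 - sqrt (enn2real (RN_deriv \<gamma> \<gamma>1 p)) *\<^sub>R snd p))\<^sup>2) \<partial>\<gamma>)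
       = ennreal (\<Sum>i\<le>m. \<Sum>j\<le>n.
           (norm (sqrt (A i j) *\<^sub>R (if i = 0 then e1 else u i)
                  - sqrt (B i j) *\<^sub>R (if j = 0 then e1 else v j)))\<^sup>2))"
proof -
  have fb0: "finite_borel_S2S2 \<gamma>0" and fb1: "finite_borel_S2S2 \<gamma>1"
    and d0: "is_discrete_measure (distr \<gamma>0 borel_S2 fst) m a u"
    and d1: "is_discrete_measure (distr \<gamma>1 borel_S2 snd) n b v"
    using Gam by (simp_all add: Gamma_def)
  interpret f0: finite_measure \<gamma>0 using fb0 by (simp add: finite_borel_S2S2_def)
  interpret f1: finite_measure \<gamma>1 using fb1 by (simp add: finite_borel_S2S2_def)
  define U where "U = u ` {1..m}"
  define V where "V = v ` {1..n}"
  have U: "finite U" "U \<subseteq> S2" using u_S2 by (auto simp: U_def)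
  have V: "finite V" "V \<subseteq> S2" using v_S2 by (auto simp: V_def)
  have sU: "U \<in> sets borel_S2" "S2 - U \<in> sets borel_S2" using U sets_S2_finite sets_S2_diff by auto
  have sV: "V \<in> sets borel_S2" "S2 - V \<in> sets borel_S2" using V sets_S2_finite sets_S2_diff by auto
  define P0 where "P0 = measure \<gamma>0"
  define P1 where "P1 = measure \<gamma>1"
  define Wa where "Wa i = (\<Sum>k\<in>{k\<in>{1..m}. u k = u i}. a k)" for i
  define Wb where "Wb j = (\<Sum>k\<in>{k\<in>{1..n}. v k = v j}. b k)" for j
  define \<alpha> where "\<alpha> i = a i / Wa i" for i
  define \<beta> where "\<beta> j = b j / Wb j" for j
  have Wa_pos: "Wa i > 0" if "i \<in> {1..m}" for i
    unfolding Wa_def using that a_pos by (intro sum_pos2[where i=i]) (auto intro: less_imp_le)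
  have Wb_pos: "Wb j > 0" if "j \<in> {1..n}" for j
    unfolding Wb_def using that b_pos by (intro sum_pos2[where i=j]) (auto intro: less_imp_le)
  have \<alpha>_nn: "\<alpha> i \<ge> 0" if "i \<in> {1..m}" for i
    using Wa_pos[OF that] bspec[OF a_pos that] by (simp add: \<alpha>_def)
  have \<beta>_nn: "\<beta> j \<ge> 0" if "j \<in> {1..n}" for j
    using Wb_pos[OF that] bspec[OF b_pos that] by (simp add: \<beta>_def)
  have tot0: "P0 ({u i} \<times> S2) = Wa i" if "i \<in> {1..m}" for i
  proof -
    have "emeasure \<gamma>0 ({u i} \<times> S2) = ennreal (\<Sum>k\<in>{1..m}. a k * indicator {u i} (u k))"
      using marg0[OF fb0 d0 sets_S2_finite[of "{u i}"]] u_S2 that by auto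
    also have "(\<Sum>k\<in>{1..m}. a k * indicator {u i} (u k)) = Wa i"
      unfolding Wa_def by (simp add: sum.inter_filter indicator_def Int_def)
    finally show ?thesis using Wa_pos[OF that] by (simp add: P0_def measure_def)
  qed
  have tot1: "P1 (S2 \<times> {v j}) = Wb j" if "j \<in> {1..n}" for j
  proof -
    have "emeasure \<gamma>1 (S2 \<times> {v j}) = ennreal (\<Sum>k\<in>{1..n}. b k * indicator {v j} (v k))"
      using marg1[OF fb1 d1 sets_S2_finite[of "{v j}"]] v_S2 that by auto
    also have "(\<Sum>k\<in>{1..n}. b k * indicator {v j} (v k)) = Wb j"
      unfolding Wb_def by (simp add: sum.inter_filter indicator_def Int_def)
    finally show ?thesis using Wb_pos[OF that] by (simp add: P1_def measure_def)
  qed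
  have n0: "emeasure \<gamma>0 ((S2 - U) \<times> S2) = 0"
  proof -
    have "emeasure \<gamma>0 ((S2 - U) \<times> S2) = ennreal (\<Sum>k\<in>{1..m}. a k * indicator (S2 - U) (u k))"
      using marg0[OF fb0 d0 sU(2)] .
    also have "(\<Sum>k\<in>{1..m}. a k * indicator (S2 - U) (u k)) = 0"
      by (intro sum.neutral) (auto simp: U_def indicator_def)
    finally show ?thesis by simp
  qed
  have n1: "emeasure \<gamma>1 (S2 \<times> (S2 - V)) = 0"
  proof -
    have "emeasure \<gamma>1 (S2 \<times> (S2 - V)) = ennreal (\<Sum>k\<in>{1..n}. b k * indicator (S2 - V) (v k))"
      using marg1[OF fb1 d1 sV(2)] .
    also have "(\<Sum>k\<in>{1..n}. b k * indicator (S2 - V) (v k)) = 0"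
      by (intro sum.neutral) (auto simp: V_def indicator_def)
    finally show ?thesis by simp
  qed
  define A where "A i j = (if i = 0 then 0 else if j = 0 then \<alpha> i * P0 ({u i} \<times> (S2 - V))
                          else \<alpha> i * (\<beta> j * P0 {(u i, v j)}))" for i j
  define B where "B i j = (if j = 0 then 0 else if i = 0 then \<beta> j * P1 ((S2 - U) \<times> {v j})
                          else \<alpha> i * (\<beta> j * P1 {(u i, v j)}))" for i j
  have P0nn: "P0 X \<ge> 0" for X by (simp add: P0_def)
  have P1nn: "P1 X \<ge> 0" for X by (simp add: P1_def)
  have adm: "A_adm m a n b A B"
    unfolding A_adm_def
  proof (intro conjI allI impI ballI)
    fix i j assume ij: "i \<le> m" "j \<le> n"
    show "0 \<le> A i j"
      using ij \<alpha>_nn \<beta>_nn P0nn P1nn by (auto simp: A_def B_def intro!: mult_nonneg_nonneg)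
  next
    fix i j assume ij: "i \<le> m" "j \<le> n"
    show "0 \<le> B i j"
      using ij \<alpha>_nn \<beta>_nn P0nn P1nn by (auto simp: A_def B_def intro!: mult_nonneg_nonneg)
  next
    fix i assume i: "i \<in> {1..m}"
    then have i0: "i \<noteq> 0" by auto
    have "(\<Sum>j\<le>n. A i j) = A i 0 + (\<Sum>j\<in>{1..n}. A i j)" by (rule split0)
    also have "(\<Sum>j\<in>{1..n}. A i j) = (\<Sum>j\<in>{1..n}. \<alpha> i * (b j / Wb j * P0 {(u i, v j)}))"
      using i0 by (intro sum.cong) (auto simp: A_def \<beta>_def)
    also have "\<dots> = \<alpha> i * (\<Sum>j\<in>{1..n}. b j / Wb j * P0 {(u i, v j)})"
      by (simp add: sum_distrib_left)
    also have "(\<Sum>j\<in>{1..n}. b j / Wb j * P0 {(u i, v j)}) = (\<Sum>y\<in>V. P0 {(u i, y)})"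
      unfolding Wb_def V_def using fiber_sum[of "{1..n}" b v "\<lambda>y. P0 {(u i, y)}"] b_pos by simp
    finally have "(\<Sum>j\<le>n. A i j) = \<alpha> i * (P0 ({u i} \<times> (S2 - V)) + (\<Sum>y\<in>V. P0 {(u i, y)}))"
      using i0 by (simp add: A_def distrib_left)
    also have "P0 ({u i} \<times> (S2 - V)) + (\<Sum>y\<in>V. P0 {(u i, y)}) = P0 ({u i} \<times> S2)"
      using split_col[OF fb0 sets_S2_finite[of "{u i}"] sets_S2_UNIV V(1) V(2)] u_S2 i
      by (simp add: P0_def)
    also have "\<dots> = Wa i" using tot0[OF i] .
    finally show "a i = (\<Sum>j\<le>n. A i j)" using Wa_pos[OF i] by (simp add: \<alpha>_def)
  next
    fix j assume "j \<le> n" then show "A 0 j = 0" by (simp add: A_def)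
  next
    fix j assume j: "j \<in> {1..n}"
    then have j0: "j \<noteq> 0" by auto
    have "(\<Sum>i\<le>m. B i j) = B 0 j + (\<Sum>i\<in>{1..m}. B i j)" by (rule split0)
    also have "(\<Sum>i\<in>{1..m}. B i j) = (\<Sum>i\<in>{1..m}. \<beta> j * (a i / Wa i * P1 {(u i, v j)}))"
      using j0 by (intro sum.cong) (auto simp: B_def \<alpha>_def)
    also have "\<dots> = \<beta> j * (\<Sum>i\<in>{1..m}. a i / Wa i * P1 {(u i, v j)})"
      by (simp add: sum_distrib_left)
    also have "(\<Sum>i\<in>{1..m}. a i / Wa i * P1 {(u i, v j)}) = (\<Sum>x\<in>U. P1 {(x, v j)})"
      unfolding Wa_def U_def using fiber_sum[of "{1..m}" a u "\<lambda>x. P1 {(x, v j)}"] a_pos by simp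
    finally have "(\<Sum>i\<le>m. B i j) = \<beta> j * (P1 ((S2 - U) \<times> {v j}) + (\<Sum>x\<in>U. P1 {(x, v j)}))"
      using j0 by (simp add: B_def distrib_left)
    also have "P1 ((S2 - U) \<times> {v j}) + (\<Sum>x\<in>U. P1 {(x, v j)}) = P1 (S2 \<times> {v j})"
      using split_row[OF fb1 sets_S2_finite[of "{v j}"] sets_S2_UNIV U(1) U(2)] v_S2 j
      by (simp add: P1_def)
    also have "\<dots> = Wb j" using tot1[OF j] .
    finally show "b j = (\<Sum>i\<le>m. B i j)" using Wb_pos[OF j] by (simp add: \<beta>_def)
  next
    fix i assume "i \<le> m" then show "B i 0 = 0" by (simp add: B_def)
  qed
  define c where "c x y = (norm (sqrt (P0 {(x, y)}) *\<^sub>R x - sqrt (P1 {(x, y)}) *\<^sub>R y))\<^sup>2" for x y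
  define K where "K i j = (norm (sqrt (A i j) *\<^sub>R (if i = 0 then e1 else u i)
                  - sqrt (B i j) *\<^sub>R (if j = 0 then e1 else v j)))\<^sup>2" for i j
  have K00: "K 0 0 = 0" by (simp add: K_def A_def B_def)
  have K0j: "K 0 j = \<beta> j * P1 ((S2 - U) \<times> {v j})" if j: "j \<in> {1..n}" for j
  proof -
    have "K 0 j = (norm (sqrt (\<beta> j * P1 ((S2 - U) \<times> {v j})) *\<^sub>R v j))\<^sup>2"
      using j by (simp add: K_def A_def B_def)
    also have "\<dots> = \<beta> j * P1 ((S2 - U) \<times> {v j})"
      using j v_S2 \<beta>_nn[OF j] P1nn by (intro norm_sqrt_scale S2_norm) auto
    finally show ?thesis .
  qed
  have Ki0: "K i 0 = \<alpha> i * P0 ({u i} \<times> (S2 - V))" if i: "i \<in> {1..m}" for i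
  proof -
    have "K i 0 = (norm (sqrt (\<alpha> i * P0 ({u i} \<times> (S2 - V))) *\<^sub>R u i))\<^sup>2"
      using i by (simp add: K_def A_def B_def)
    also have "\<dots> = \<alpha> i * P0 ({u i} \<times> (S2 - V))"
      using i u_S2 \<alpha>_nn[OF i] P0nn by (intro norm_sqrt_scale S2_norm) auto
    finally show ?thesis .
  qed
  have Kij: "K i j = \<alpha> i * (\<beta> j * c (u i) (v j))" if i: "i \<in> {1..m}" and j: "j \<in> {1..n}" for i j
  proof -
    have "K i j = (norm (sqrt ((\<alpha> i * \<beta> j) * P0 {(u i, v j)}) *\<^sub>R u i
                          - sqrt ((\<alpha> i * \<beta> j) * P1 {(u i, v j)}) *\<^sub>R v j))\<^sup>2"
      using i j by (simp add: K_def A_def B_def mult.assoc)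
    also have "\<dots> = (\<alpha> i * \<beta> j) * c (u i) (v j)"
      unfolding c_def using \<alpha>_nn[OF i] \<beta>_nn[OF j] P0nn P1nn by (intro homog) auto
    finally show ?thesis by (simp add: mult.assoc)
  qed
  have row0: "(\<Sum>j\<le>n. K 0 j) = P1 ((S2 - U) \<times> V)"
  proof -
    have "(\<Sum>j\<le>n. K 0 j) = K 0 0 + (\<Sum>j\<in>{1..n}. K 0 j)" by (rule split0)
    also have "(\<Sum>j\<in>{1..n}. K 0 j) = (\<Sum>j\<in>{1..n}. b j / Wb j * P1 ((S2 - U) \<times> {v j}))"
      by (intro sum.cong) (auto simp: K0j \<beta>_def)
    also have "\<dots> = (\<Sum>y\<in>V. P1 ((S2 - U) \<times> {y}))"
      unfolding Wb_def V_def using fiber_sum[of "{1..n}" b v "\<lambda>y. P1 ((S2 - U) \<times> {y})"] b_pos by simp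
    also have "\<dots> = P1 ((S2 - U) \<times> V)"
      using split_col[OF fb1 sU(2) sV(1) V(1) subset_refl] by (simp add: P1_def)
    finally show ?thesis using K00 by simp
  qed
  have rowi: "(\<Sum>j\<le>n. K i j) = \<alpha> i * (P0 ({u i} \<times> (S2 - V)) + (\<Sum>y\<in>V. c (u i) y))"
    if i: "i \<in> {1..m}" for i
  proof -
    have "(\<Sum>j\<le>n. K i j) = K i 0 + (\<Sum>j\<in>{1..n}. K i j)" by (rule split0)
    also have "(\<Sum>j\<in>{1..n}. K i j) = \<alpha> i * (\<Sum>j\<in>{1..n}. b j / Wb j * c (u i) (v j))"
      unfolding sum_distrib_left using i by (intro sum.cong) (auto simp: Kij \<beta>_def)
    also have "(\<Sum>j\<in>{1..n}. b j / Wb j * c (u i) (v j)) = (\<Sum>y\<in>V. c (u i) y)"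
      unfolding Wb_def V_def using fiber_sum[of "{1..n}" b v "\<lambda>y. c (u i) y"] b_pos by simp
    finally show ?thesis using Ki0[OF i] by (simp add: distrib_left)
  qed
  have cost: "(\<Sum>i\<le>m. \<Sum>j\<le>n.
           (norm (sqrt (A i j) *\<^sub>R (if i = 0 then e1 else u i)
                  - sqrt (B i j) *\<^sub>R (if j = 0 then e1 else v j)))\<^sup>2)
     = (\<Sum>q\<in>U\<times>V. (norm (sqrt (P0 {q}) *\<^sub>R fst q - sqrt (P1 {q}) *\<^sub>R snd q))\<^sup>2)
          + P0 (U \<times> (S2 - V)) + P1 ((S2 - U) \<times> V)"
  proof -
    have "(\<Sum>i\<le>m. \<Sum>j\<le>n.
           (norm (sqrt (A i j) *\<^sub>R (if i = 0 then e1 else u i)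
                  - sqrt (B i j) *\<^sub>R (if j = 0 then e1 else v j)))\<^sup>2) = (\<Sum>i\<le>m. \<Sum>j\<le>n. K i j)"
      by (simp add: K_def)
    also have "\<dots> = (\<Sum>j\<le>n. K 0 j) + (\<Sum>i\<in>{1..m}. \<Sum>j\<le>n. K i j)" by (rule split0)
    also have "(\<Sum>i\<in>{1..m}. \<Sum>j\<le>n. K i j)
        = (\<Sum>i\<in>{1..m}. a i / Wa i * (P0 ({u i} \<times> (S2 - V)) + (\<Sum>y\<in>V. c (u i) y)))"
      by (intro sum.cong) (auto simp: rowi \<alpha>_def)
    also have "\<dots> = (\<Sum>x\<in>U. P0 ({x} \<times> (S2 - V)) + (\<Sum>y\<in>V. c x y))"
      unfolding Wa_def U_def
      using fiber_sum[of "{1..m}" a u "\<lambda>x. P0 ({x} \<times> (S2 - V)) + (\<Sum>y\<in>V. c x y)"] a_pos by simp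
    also have "\<dots> = (\<Sum>x\<in>U. P0 ({x} \<times> (S2 - V))) + (\<Sum>x\<in>U. \<Sum>y\<in>V. c x y)"
      by (rule sum.distrib)
    also have "(\<Sum>x\<in>U. P0 ({x} \<times> (S2 - V))) = P0 (U \<times> (S2 - V))"
      using split_row[OF fb0 sV(2) sU(1) U(1) subset_refl] by (simp add: P0_def)
    also have "(\<Sum>x\<in>U. \<Sum>y\<in>V. c x y) = (\<Sum>q\<in>U\<times>V. (norm (sqrt (P0 {q}) *\<^sub>R fst q - sqrt (P1 {q}) *\<^sub>R snd q))\<^sup>2)"
      unfolding sum.cartesian_product c_def by (rule sum.cong) auto
    finally show ?thesis using row0 by simp
  qed
  show ?thesis
  proof (intro exI conjI allI impI)
    show "A_adm m a n b A B" by (rule adm)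
  next
    fix \<gamma> :: "((real^3) \<times> (real^3)) measure"
    assume h: "sets \<gamma> = sets borel_S2S2 \<and> sigma_finite_measure \<gamma> \<and>
       absolutely_continuous \<gamma> \<gamma>0 \<and> absolutely_continuous \<gamma> \<gamma>1"
    show "(\<integral>\<^sup>+ p. ennreal ((norm (sqrt (enn2real (RN_deriv \<gamma> \<gamma>0 p)) *\<^sub>R fst p
                                 - sqrt (enn2real (RN_deriv \<gamma> \<gamma>1 p)) *\<^sub>R snd p))\<^sup>2) \<partial>\<gamma>)
       = ennreal (\<Sum>i\<le>m. \<Sum>j\<le>n.
           (norm (sqrt (A i j) *\<^sub>R (if i = 0 then e1 else u i)
                  - sqrt (B i j) *\<^sub>R (if j = 0 then e1 else v j)))\<^sup>2)"
      unfolding cost P0_def P1_def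
      using integral_formula[OF _ _ _ _ fb0 fb1 U V n0 n1] h by blast
  qed
qed

end
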